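(* In the general setting of the context, let $(x_1^*,\dots,x_n^* )$ be an optimal solution attaining $P^*$ together with a vector $y^*\in\mathbb{R}^m_+$ such that $y^*_i=0$ whenever $(\sum_tA_tx^*_t)_i<b_i$ and $A_t^\top y^*$ is a supergradient of $f_t$ at $x_t^*$ for every $t$. For $i\in[m]$ and $t\in[n]$ let $$R_t^i=\frac{1}{n-t+1}\sum_{s=t}^n(A_{\sigma(s)}x^*_{\sigma(s)})_i-\frac{b_i}{n}.$$ Then $$\mathbb{P}\Big(\exists\,t\in[n(1-\epsilon)],\ \exists\,i\in[m]:\ R_t^i>\frac{b_i}{n}2^{-\kappa(t)/2}\epsilon^{1/2}\Big)\le mL\exp\Big(-\frac{\epsilon^2}{6\gamma}\Big).$$
   Context: General setting. Let $m,k,n$ be positive integers and $b\in\mathbb{R}^m_{++}$. Let $\mathcal G$ be the set of proper, concave, upper semicontinuous functions $f:\mathbb{R}^k\to[-\infty,\infty)$ with bounded superlevel sets such that $\mathrm{dom} f\subset\mathbb{R}^k_+$ and $f(0)=0$. Let $f_1,\dots,f_n\in\mathcal G$ and $A_1,\dots,A_n\in\mathbb{R}_+^{m\times k}$. Let $P^*=\sup\{\sum_{t=1}^n f_t(x_t): x_t\in\mathbb{R}^k,\ \sum_{t=1}^n A_tx_t\le b\}$ and assume $P^*>0$. Let $\gamma>0$ satisfy, for every $t\in[n]$: $(A_tx)_i/b_i\le\gamma$ for all $i\in[m]$ and all $x$ with $f_t(x)\ge0$, and $f_t(x)\le\gamma P^*$ for all $x\in\mathrm{dom} f_t$. Let $\epsilon\in(0,1)$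 be such that $L=\log_2(1/\epsilon)$ and $n\epsilon$ are integers. Let $\sigma$ be a uniformly random permutation of $[n]$; probabilities are over $\sigma$. For $t\in[n(1-\epsilon)]$, $\kappa(t)=\lfloor\log_2\frac{n-t}{n\epsilon}\rfloor+1$, i.e. $\kappa(t)=k\in[L]$ iff $n(1-2^k\epsilon)<t\le n(1-2^{k-1}\epsilon)$. *)

theory Defs
  imports "HOL-Analysis.Analysis" "HOL-Probability.Probability"
begin

definition hypograph :: "('a::real_vector \<Rightarrow> ereal) \<Rightarrow> ('a \<times> real) set" where
  "hypograph f = {(x, c). ereal c \<le> f x}"

definition edom :: "('a \<Rightarrow> ereal) \<Rightarrow> 'a set" where
  "edom f = {x. f x \<noteq> -\<infinity>}"

definition proper_concave_fun :: "('a::real_vector \<Rightarrow> ereal) \<Rightarrow> bool" where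
  "proper_concave_fun f \<longleftrightarrow> (\<forall>x. f x \<noteq> \<infinity>) \<and> edom f \<noteq> {} \<and> convex (hypograph f)"

definition usc_fun :: "('a::topological_space \<Rightarrow> ereal) \<Rightarrow> bool" where
  "usc_fun f \<longleftrightarrow> (\<forall>c::real. closed {x. ereal c \<le> f x})"

definition bounded_superlevel :: "('a::metric_space \<Rightarrow> ereal) \<Rightarrow> bool" where
  "bounded_superlevel f \<longleftrightarrow> (\<forall>c::real. bounded {x. ereal c \<le> f x})"

definition classG :: "(real^'k \<Rightarrow> ereal) \<Rightarrow> bool" where
  "classG f \<longleftrightarrow> proper_concave_fun f \<and> usc_fun f \<and> bounded_superlevel f
     \<and> edom f \<subseteq> {x. \<forall>j. 0 \<le> x $ j} \<and> f 0 = 0"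

definition supergradient :: "('a::real_inner \<Rightarrow> ereal) \<Rightarrow> 'a \<Rightarrow> 'a \<Rightarrow> bool" where
  "supergradient f x g \<longleftrightarrow> (\<forall>z. f z \<le> f x + ereal (g \<bullet> (z - x)))"

definition kappa :: "nat \<Rightarrow> real \<Rightarrow> nat \<Rightarrow> int" where
  "kappa n \<epsilon> t = \<lfloor>log 2 ((real n - real t) / (real n * \<epsilon>))\<rfloor> + 1"

definition Rti :: "nat \<Rightarrow> (nat \<Rightarrow> real^'k^'m) \<Rightarrow> (nat \<Rightarrow> real^'k) \<Rightarrow> real^'m
     \<Rightarrow> (nat \<Rightarrow> nat) \<Rightarrow> nat \<Rightarrow> 'm \<Rightarrow> real" where
  "Rti n A xs b \<sigma> t i = (1 / (real n - real t + 1)) * (\<Sum>s=t..n. (A (\<sigma> s) *v xs (\<sigma> s)) $ i) - b $ i / real n"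

end

theory Submission
  imports Defs "HOL-Combinatorics.Multiset_Permutations"
begin


lemma exp_neg_le_quad:
  fixes x :: real assumes "0 \<le> x" shows "exp (-x) \<le> 1 - x + x^2/2"
proof -
  let ?h = "\<lambda>x::real. 1 - x + x^2/2 - exp (-x)"
  have "?h 0 \<le> ?h x"
  proof (rule DERIV_nonneg_imp_nondecreasing[OF assms])
    fix y :: real assume "0 \<le> y" "y \<le> x"
    have "(?h has_real_derivative (-1 + y + exp (-y))) (at y)"
      by (auto intro!: derivative_eq_intros simp: power2_eq_square)
    moreover have "-1 + y + exp (-y) \<ge> 0" using exp_ge_add_one_self[of "-y"] by linarith
    ultimately show "\<exists>d. (?h has_real_derivative d) (at y) \<and> 0 \<le> d" by blast
  qed
  then show ?thesis by simp
qed

lemma avg_exp_bound: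
  fixes a :: "'a \<Rightarrow> real"
  assumes fin: "finite A" and r: "card A = r" "r > 0"
    and ab: "\<forall>x\<in>A. 0 \<le> a x \<and> a x \<le> \<gamma>" and s: "0 \<le> s"
  defines "M \<equiv> sum a A / real r"
  shows "(\<Sum>x\<in>A. exp (s * (M - a x))) \<le> real r * exp (s^2 * \<gamma> * M / 2)"
proof -
  have pt: "exp (s * (M - a x)) \<le> exp (s*M) * (1 - s * a x + s^2 * \<gamma> * a x / 2)" if "x \<in> A" for x
  proof -
    have "exp (s * (M - a x)) = exp (s*M) * exp (-(s * a x))" by (simp add: algebra_simps exp_add[symmetric])
    also have "exp (-(s * a x)) \<le> 1 - s * a x + (s * a x)^2/2"
      using exp_neg_le_quad[of "s * a x"] ab that s by auto
    also have "(s * a x)^2 = s^2 * (a x * a x)" by (simp add: power2_eq_square)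
    also have "a x * a x \<le> \<gamma> * a x" using ab that by (auto intro: mult_right_mono)
    hence "1 - s * a x + s^2 * (a x * a x)/2 \<le> 1 - s * a x + s^2 * \<gamma> * a x / 2"
      using mult_left_mono[of "a x * a x" "\<gamma> * a x" "s^2"] by (simp add: mult.assoc)
    finally show ?thesis by (simp add: mult_left_mono)
  qed
  have "(\<Sum>x\<in>A. exp (s * (M - a x))) \<le> (\<Sum>x\<in>A. exp (s*M) * (1 - s * a x + s^2 * \<gamma> * a x / 2))"
    by (rule sum_mono) (use pt in auto)
  also have "\<dots> = (\<Sum>x\<in>A. exp (s*M) * (1 + (s^2 * \<gamma> / 2 - s) * a x))"
    by (rule sum.cong) (auto simp: algebra_simps)
  also have "\<dots> = exp (s*M) * (\<Sum>x\<in>A. (1 + (s^2 * \<gamma> / 2 - s) * a x))"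
    by (rule sum_distrib_left[symmetric])
  also have "(\<Sum>x\<in>A. (1 + (s^2 * \<gamma> / 2 - s) * a x)) = real r + (s^2 * \<gamma> / 2 - s) * sum a A"
    by (simp add: sum.distrib sum_distrib_left[symmetric] r)
  also have "real r + (s^2 * \<gamma> / 2 - s) * sum a A = real r - s * sum a A + s^2 * \<gamma> * sum a A / 2"
    by (simp add: algebra_simps)
  also have "real r - s * sum a A + s^2 * \<gamma> * sum a A / 2 = real r * (1 + (- s * M + s^2 * \<gamma> * M / 2))"
    using r by (simp add: M_def field_simps)
  also have "\<dots> \<le> real r * exp (- s * M + s^2 * \<gamma> * M / 2)"
    by (rule mult_left_mono[OF exp_ge_add_one_self]) simp
  finally have "(\<Sum>x\<in>A. exp (s * (M - a x))) \<le> exp (s * M) * (real r * exp (- s * M + s^2 * \<gamma> * M / 2))"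
    by (simp add: mult_left_mono)
  also have "\<dots> = real r * exp (s^2 * \<gamma> * M / 2)"
    by (simp add: exp_add[symmetric] algebra_simps)
  finally show ?thesis .
qed

lemma step_ineq:
  fixes a :: "'a \<Rightarrow> real"
  assumes fin: "finite A" and r: "card A = r" "r \<ge> 3"
    and ab: "\<forall>x\<in>A. 0 \<le> a x \<and> a x \<le> \<gamma>" and g: "\<gamma> > 0" and L: "\<Lambda> \<ge> 0"
    and c: "c = \<Lambda>^2 * \<gamma> / 2"
    and bp: "0 \<le> \<Lambda> - c / (real r - 2)"
  shows "(\<Sum>x\<in>A. exp ((\<Lambda> - c / (real r - 2)) * ((sum a A - a x) / (real r - 1))))
           \<le> real r * exp ((\<Lambda> - c / (real r - 1)) * (sum a A / real r))"
proof -
  define M where "M = sum a A / real r"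
  define b' where "b' = \<Lambda> - c / (real r - 2)"
  define s where "s = b' / (real r - 1)"
  have r1: "real r - 1 > 0" "real r - 2 > 0" using r by auto
  have M0: "M \<ge> 0" unfolding M_def using ab by (auto intro!: sum_nonneg divide_nonneg_nonneg)
  have s0: "s \<ge> 0" using bp r1 by (simp add: s_def b'_def)
  have eq: "b' * ((sum a A - a x) / (real r - 1)) = b' * M + s * (M - a x)" for x
    using r1 r by (simp add: M_def s_def field_simps)
  have "(\<Sum>x\<in>A. exp (b' * ((sum a A - a x) / (real r - 1)))) = (\<Sum>x\<in>A. exp (b' * M) * exp (s * (M - a x)))"
    by (rule sum.cong[OF refl], subst eq, simp add: exp_add)
  also have "\<dots> = exp (b' * M) * (\<Sum>x\<in>A. exp (s * (M - a x)))" by (simp add: sum_distrib_left)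
  also have "\<dots> \<le> exp (b' * M) * (real r * exp (s^2 * \<gamma> * M / 2))"
    using avg_exp_bound[OF fin r(1) _ ab s0] r by (simp add: M_def)
  also have "\<dots> = real r * exp (b' * M + s^2 * \<gamma> * M / 2)" by (simp add: exp_add)
  also have "b' * M + s^2 * \<gamma> * M / 2 \<le> (\<Lambda> - c / (real r - 1)) * M"
  proof -
    have "c \<ge> 0" unfolding c using g by (intro divide_nonneg_nonneg mult_nonneg_nonneg) auto
    hence bL: "b' \<le> \<Lambda>" using r1 by (simp add: b'_def)
    have "b'^2 \<le> \<Lambda>^2" using bL bp by (simp add: b'_def power_mono)
    hence "s^2 * \<gamma> / 2 \<le> c / (real r - 1)^2"
    proof -
      have "b'^2 * \<gamma> \<le> \<Lambda>^2 * \<gamma>" using \<open>b'^2 \<le> \<Lambda>^2\<close> g by (simp add: mult_right_mono)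
      hence "b'^2 * \<gamma> / (2 * (real r - 1)^2) \<le> \<Lambda>^2 * \<gamma> / (2 * (real r - 1)^2)"
        using r1 by (intro divide_right_mono) auto
      thus ?thesis by (simp add: s_def c power_divide field_simps)
    qed
    also have "c / (real r - 1)^2 \<le> c / (real r - 2) - c / (real r - 1)"
    proof -
      have "c \<ge> 0" unfolding c using g by (intro divide_nonneg_nonneg mult_nonneg_nonneg) auto
      have "c / (real r - 2) - c / (real r - 1) = c / ((real r - 1) * (real r - 2))"
        using r1 by (simp add: field_simps)
      also have "c / (real r - 1)^2 \<le> \<dots>"
        using r1 \<open>c \<ge> 0\<close> by (auto simp: power2_eq_square intro!: divide_left_mono mult_left_mono mult_pos_pos)
      finally show ?thesis by simp
    qed
    finally have "s^2 * \<gamma> / 2 \<le> c / (real r - 2) - c / (real r - 1)" .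
    hence "b' + s^2 * \<gamma> / 2 \<le> \<Lambda> - c / (real r - 1)" unfolding b'_def by linarith
    hence "(b' + s^2 * \<gamma> / 2) * M \<le> (\<Lambda> - c / (real r - 1)) * M" using M0 by (rule mult_right_mono)
    thus ?thesis by (simp add: algebra_simps)
  qed
  hence "real r * exp (b' * M + s^2 * \<gamma> * M / 2) \<le> real r * exp ((\<Lambda> - c / (real r - 1)) * M)"
    by (intro mult_left_mono) auto
  finally show ?thesis by (simp add: b'_def M_def)
qed

definition badl :: "('a \<Rightarrow> real) \<Rightarrow> nat \<Rightarrow> real \<Rightarrow> 'a list \<Rightarrow> bool" where
  "badl a r0 \<theta> xs \<longleftrightarrow> (\<exists>j. j + r0 \<le> length xs \<and> \<theta> * real (length xs - j) < sum a (set (drop j xs)))"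

lemma badl_Cons:
  "badl a r0 \<theta> (x#ys) \<longleftrightarrow>
     (r0 \<le> Suc (length ys) \<and> \<theta> * real (Suc (length ys)) < sum a (set (x#ys))) \<or> badl a r0 \<theta> ys"
proof
  assume "badl a r0 \<theta> (x#ys)"
  then obtain j where j: "j + r0 \<le> length (x#ys)" "\<theta> * real (length (x#ys) - j) < sum a (set (drop j (x#ys)))"
    unfolding badl_def by blast
  show "(r0 \<le> Suc (length ys) \<and> \<theta> * real (Suc (length ys)) < sum a (set (x#ys))) \<or> badl a r0 \<theta> ys"
  proof (cases j)
    case 0 then show ?thesis using j by simp
  next
    case (Suc j') then show ?thesis using j unfolding badl_def by (intro disjI2 exI[of _ j']) auto
  qed
next
  assume "(r0 \<le> Suc (length ys) \<and> \<theta> * real (Suc (length ys)) < sum a (set (x#ys))) \<or> badl a r0 \<theta> ys"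
  then show "badl a r0 \<theta> (x#ys)"
  proof
    assume "r0 \<le> Suc (length ys) \<and> \<theta> * real (Suc (length ys)) < sum a (set (x#ys))"
    then show ?thesis unfolding badl_def by (intro exI[of _ 0]) auto
  next
    assume "badl a r0 \<theta> ys"
    then obtain j where "j + r0 \<le> length ys" "\<theta> * real (length ys - j) < sum a (set (drop j ys))"
      unfolding badl_def by blast
    then show ?thesis unfolding badl_def by (intro exI[of _ "Suc j"]) auto
  qed
qed

lemma core:
  fixes a :: "'a \<Rightarrow> real"
  assumes g: "\<gamma> > 0" and th: "\<theta> > 0" and L: "\<Lambda> \<ge> 0" and c: "c = \<Lambda>^2 * \<gamma> / 2"
    and r0: "r0 \<ge> 2" and lam: "0 \<le> \<Lambda> - c / (real r0 - 1)"
  shows "finite A \<Longrightarrow> r0 \<le> card A \<Longrightarrow> \<forall>x\<in>A. 0 \<le> a x \<and> a x \<le> \<gamma> \<Longrightarrow>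
    real (card {xs\<in>permutations_of_set A. badl a r0 \<theta> xs}) / fact (card A)
      \<le> exp ((\<Lambda> - c / (real (card A) - 1)) * (sum a A / real (card A)) - (\<Lambda> - c / (real r0 - 1)) * \<theta>)"
proof (induction "card A" arbitrary: A rule: less_induct)
  case (less A)
  define r where "r = card A"
  define S where "S = sum a A"
  define lm where "lm = \<Lambda> - c / (real r0 - 1)"
  have c0: "c \<ge> 0" unfolding c using g by (intro divide_nonneg_nonneg mult_nonneg_nonneg) auto
  have rr0: "r \<ge> r0" using less by (simp add: r_def)
  have S0: "S \<ge> 0" unfolding S_def using less.prems by (auto intro!: sum_nonneg)
  have blm: "lm \<le> \<Lambda> - c / (real r - 1)"
  proof -
    have "c / (real r - 1) \<le> c / (real r0 - 1)" using rr0 r0 c0 by (intro divide_left_mono) auto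
    thus ?thesis by (simp add: lm_def)
  qed
  have fin: "finite (permutations_of_set A)" by simp
  have cardle: "card {xs\<in>permutations_of_set A. badl a r0 \<theta> xs} \<le> fact r"
    using card_mono[OF fin, of "{xs\<in>permutations_of_set A. badl a r0 \<theta> xs}"] less.prems
    by (auto simp: r_def)
  show ?case
  proof (cases "\<theta> * real r < S")
    case True
    have rpos: "real r > 0" using rr0 r0 by simp
    have "\<theta> < S / real r" using True rpos by (simp add: field_simps)
    have "lm * \<theta> \<le> lm * (S / real r)" using lam \<open>\<theta> < S / real r\<close> unfolding lm_def by (intro mult_left_mono) auto
    also have "\<dots> \<le> (\<Lambda> - c / (real r - 1)) * (S / real r)"
      using blm S0 rpos by (intro mult_right_mono) auto
    finally have "0 \<le> (\<Lambda> - c / (real r - 1)) * (S / real r) - lm * \<theta>" by simp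
    hence e1: "1 \<le> exp ((\<Lambda> - c / (real r - 1)) * (S / real r) - lm * \<theta>)" by simp
    have e2: "real (card {xs\<in>permutations_of_set A. badl a r0 \<theta> xs}) / fact r \<le> 1"
    proof -
      have "real (card {xs\<in>permutations_of_set A. badl a r0 \<theta> xs}) \<le> fact r"
        using cardle by (metis of_nat_fact of_nat_le_iff)
      thus ?thesis by (simp add: divide_le_eq_1)
    qed
    from order_trans[OF e2 e1] show ?thesis unfolding r_def S_def lm_def .
  next
    case False
    show ?thesis
    proof (cases "r = r0")
      case True
      have "{xs\<in>permutations_of_set A. badl a r0 \<theta> xs} = {}"
      proof (safe)
        fix xs assume xs: "xs \<in> permutations_of_set A" "badl a r0 \<theta> xs"
        have len: "length xs = r" using xs(1) by (simp add: length_finite_permutations_of_set r_def)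
        have st: "set xs = A" using xs(1) by (simp add: permutations_of_set_def)
        from xs(2) obtain j where "j + r0 \<le> length xs" "\<theta> * real (length xs - j) < sum a (set (drop j xs))"
          unfolding badl_def by blast
        then show "xs \<in> {}" using len st True False by (simp add: S_def)
      qed
      then show ?thesis by (simp only: card.empty) simp
    next
      case False2: False
      have rgt: "r > r0" using rr0 False2 by simp
      have Ane: "A \<noteq> {}" using rgt less.prems by (auto simp: r_def)
      have seteq: "{xs\<in>permutations_of_set A. badl a r0 \<theta> xs} =
          (\<Union>x\<in>A. (#) x ` {ys\<in>permutations_of_set (A - {x}). badl a r0 \<theta> ys})"
      proof -
        have key: "badl a r0 \<theta> (x#ys) \<longleftrightarrow> badl a r0 \<theta> ys" if "x \<in> A" "ys \<in> permutations_of_set (A - {x})" for x ys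
        proof -
          have "set (x#ys) = A" using that by (auto simp: permutations_of_set_def)
          moreover have "Suc (length ys) = r"
          proof -
            have "card A > 0" using that less.prems by (auto simp: card_gt_0_iff)
            thus ?thesis using that less.prems by (simp add: length_finite_permutations_of_set r_def card_Diff_singleton)
          qed
          ultimately show ?thesis using False by (simp add: badl_Cons S_def)
        qed
        have eq: "permutations_of_set A = (\<Union>x\<in>A. (#) x ` permutations_of_set (A - {x}))"
          by (rule permutations_of_set_nonempty[OF Ane])
        show ?thesis
        proof (rule set_eqI, rule iffI)
          fix xs assume "xs \<in> {xs\<in>permutations_of_set A. badl a r0 \<theta> xs}"
          hence xs: "xs \<in> permutations_of_set A" "badl a r0 \<theta> xs" by auto
          from xs(1) obtain x ys where x: "x \<in> A" "ys \<in> permutations_of_set (A - {x})" "xs = x # ys"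
            by (subst (asm) eq) blast
          have "badl a r0 \<theta> ys" using key[OF x(1,2)] xs(2) x(3) by simp
          thus "xs \<in> (\<Union>x\<in>A. (#) x ` {ys\<in>permutations_of_set (A - {x}). badl a r0 \<theta> ys})"
            using x by blast
        next
          fix xs assume "xs \<in> (\<Union>x\<in>A. (#) x ` {ys\<in>permutations_of_set (A - {x}). badl a r0 \<theta> ys})"
          then obtain x ys where x: "x \<in> A" "ys \<in> permutations_of_set (A - {x})" "xs = x # ys" "badl a r0 \<theta> ys"
            by blast
          have "xs \<in> permutations_of_set A" using x eq by blast
          moreover have "badl a r0 \<theta> xs" using key[OF x(1,2)] x(3,4) by simp
          ultimately show "xs \<in> {xs\<in>permutations_of_set A. badl a r0 \<theta> xs}" by blast
        qed
      qed
      have cardeq: "card {xs\<in>permutations_of_set A. badl a r0 \<theta> xs} =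
          (\<Sum>x\<in>A. card {ys\<in>permutations_of_set (A - {x}). badl a r0 \<theta> ys})"
      proof -
        have "card (\<Union>x\<in>A. (#) x ` {ys\<in>permutations_of_set (A - {x}). badl a r0 \<theta> ys})
            = (\<Sum>x\<in>A. card ((#) x ` {ys\<in>permutations_of_set (A - {x}). badl a r0 \<theta> ys}))"
        proof (rule card_UN_disjoint)
          show "finite A" using less.prems(1) .
          show "\<forall>i\<in>A. finite ((#) i ` {ys\<in>permutations_of_set (A - {i}). badl a r0 \<theta> ys})" by simp
          show "\<forall>i\<in>A. \<forall>j\<in>A. i \<noteq> j \<longrightarrow> ((#) i ` {ys\<in>permutations_of_set (A - {i}). badl a r0 \<theta> ys}) \<inter>
             ((#) j ` {ys\<in>permutations_of_set (A - {j}). badl a r0 \<theta> ys}) = {}" by blast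
        qed
        also have "\<dots> = (\<Sum>x\<in>A. card {ys\<in>permutations_of_set (A - {x}). badl a r0 \<theta> ys})"
          by (rule sum.cong[OF refl], rule card_image) (simp add: inj_on_def)
        finally show ?thesis unfolding seteq .
      qed
      have cA: "card (A - {x}) = r - 1" if "x \<in> A" for x using that less.prems by (simp add: r_def)
      have IH: "real (card {ys\<in>permutations_of_set (A - {x}). badl a r0 \<theta> ys})
          \<le> fact (r - 1) * exp ((\<Lambda> - c / (real r - 2)) * ((S - a x) / (real r - 1)) - lm * \<theta>)"
        if x: "x \<in> A" for x
      proof -
        have h: "real (card {ys\<in>permutations_of_set (A - {x}). badl a r0 \<theta> ys}) / fact (card (A - {x}))
          \<le> exp ((\<Lambda> - c / (real (card (A - {x})) - 1)) * (sum a (A - {x}) / real (card (A - {x}))) - lm * \<theta>)"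
          using less.hyps[of "A - {x}"] less.prems x cA[OF x] rgt unfolding lm_def
          by (auto simp: r_def)
        have "real (card (A - {x})) = real r - 1" "real (card (A - {x})) - 1 = real r - 2"
          using cA[OF x] rgt r0 by auto
        moreover have "sum a (A - {x}) = S - a x" using x less.prems by (simp add: S_def sum_diff1)
        ultimately have h2: "real (card {ys\<in>permutations_of_set (A - {x}). badl a r0 \<theta> ys}) / fact (r - 1)
          \<le> exp ((\<Lambda> - c / (real r - 2)) * ((S - a x) / (real r - 1)) - lm * \<theta>)"
          using h cA[OF x] by simp
        show ?thesis using h2 by (simp add: divide_le_eq mult.commute)
      qed
      have "real (card {xs\<in>permutations_of_set A. badl a r0 \<theta> xs})
          \<le> (\<Sum>x\<in>A. fact (r - 1) * exp ((\<Lambda> - c / (real r - 2)) * ((S - a x) / (real r - 1)) - lm * \<theta>))"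
        unfolding cardeq of_nat_sum by (rule sum_mono) (rule IH)
      also have "\<dots> = (\<Sum>x\<in>A. (fact (r - 1) * exp (- lm * \<theta>)) * exp ((\<Lambda> - c / (real r - 2)) * ((S - a x) / (real r - 1))))"
        by (rule sum.cong[OF refl]) (simp only: diff_conv_add_uminus exp_add mult_ac mult_minus_left mult_minus_right)
      also have "\<dots> = fact (r - 1) * exp (- lm * \<theta>) *
          (\<Sum>x\<in>A. exp ((\<Lambda> - c / (real r - 2)) * ((S - a x) / (real r - 1))))"
        by (rule sum_distrib_left[symmetric])
      also have "\<dots> \<le> fact (r - 1) * exp (- lm * \<theta>) * (real r * exp ((\<Lambda> - c / (real r - 1)) * (S / real r)))"
      proof (rule mult_left_mono)
        have "c / (real r - 2) \<le> c / (real r0 - 1)" using rgt r0 c0 by (intro divide_left_mono) auto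
        hence bp: "0 \<le> \<Lambda> - c / (real r - 2)" using lam by linarith
        show "(\<Sum>x\<in>A. exp ((\<Lambda> - c / (real r - 2)) * ((S - a x) / (real r - 1))))
              \<le> real r * exp ((\<Lambda> - c / (real r - 1)) * (S / real r))"
          unfolding S_def using step_ineq[OF less.prems(1) r_def[symmetric] _ less.prems(3) g L c bp] rgt r0
          by simp
      qed simp
      also have "\<dots> = fact r * exp ((\<Lambda> - c / (real r - 1)) * (S / real r) - lm * \<theta>)"
      proof -
        have f: "(fact r::real) = real r * fact (r - 1)" using rgt
          by (metis Suc_pred' gr_zeroI not_less_zero fact_Suc of_nat_fact of_nat_mult)
        show ?thesis unfolding f by (simp only: diff_conv_add_uminus exp_add mult_ac mult_minus_left mult_minus_right)
      qed
      finally have fin2: "real (card {xs\<in>permutations_of_set A. badl a r0 \<theta> xs})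
          \<le> fact r * exp ((\<Lambda> - c / (real r - 1)) * (S / real r) - lm * \<theta>)" .
      have pos: "(fact r::real) > 0" by simp
      have "real (card {xs\<in>permutations_of_set A. badl a r0 \<theta> xs}) / fact r
          \<le> exp ((\<Lambda> - c / (real r - 1)) * (S / real r) - lm * \<theta>)"
        by (subst pos_divide_le_eq[OF pos]) (use fin2 in \<open>simp only: mult_ac\<close>)
      thus ?thesis unfolding r_def S_def lm_def .
    qed
  qed
qed

lemma block_bound:
  fixes a :: "nat \<Rightarrow> real"
  assumes n: "n > 0" and ab: "\<forall>x\<in>{1..n}. 0 \<le> a x \<and> a x \<le> \<gamma>" and g: "\<gamma> > 0"
    and S1: "sum a {1..n} \<le> 1" and eta: "0 < \<eta>" "\<eta> \<le> 1/2" and r0: "r0 \<ge> 2"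
    and key: "\<epsilon>^2 / 2 \<le> (real r0 - 1) * \<eta>^2 / real n"
  shows "real (card {xs\<in>permutations_of_set {1..n}. badl a r0 ((1 + \<eta>) / real n) xs}) / fact n
           \<le> exp (- (\<epsilon>^2) / (6 * \<gamma>))"
proof (cases "r0 \<le> n")
  case False
  have "{xs\<in>permutations_of_set {1..n}. badl a r0 ((1 + \<eta>) / real n) xs} = {}"
    using False by (auto simp: badl_def length_finite_permutations_of_set)
  then show ?thesis by (simp only: card.empty) simp
next
  case True
  define Nr where "Nr = real r0 - 1"
  define \<theta> where "\<theta> = (1 + \<eta>) / real n"
  define \<Lambda> where "\<Lambda> = Nr * \<eta> / ((1 + \<eta>) * \<gamma>)"
  define c where "c = \<Lambda>^2 * \<gamma> / 2"
  define lm where "lm = \<Lambda> - c / Nr"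
  have Nr: "Nr \<ge> 1" using r0 by (simp add: Nr_def)
  have L0: "\<Lambda> \<ge> 0" using Nr eta g by (simp add: \<Lambda>_def)
  have c0: "c \<ge> 0" unfolding c_def using g by (intro divide_nonneg_nonneg mult_nonneg_nonneg) auto
  have cNr: "c / Nr = Nr * \<eta>^2 / (2 * (1 + \<eta>)^2 * \<gamma>)"
  proof -
    define p where "p = 1 + \<eta>"
    have p: "p > 0" using eta by (simp add: p_def)
    show ?thesis unfolding p_def[symmetric] using Nr g p
      by (simp add: c_def \<Lambda>_def p_def[symmetric] power2_eq_square field_simps)
  qed
  have lm_eq: "lm = Nr * \<eta> / ((1 + \<eta>) * \<gamma>) * (1 - \<eta> / (2 * (1 + \<eta>)))"
  proof -
    define p where "p = 1 + \<eta>"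
    have p: "p > 0" using eta by (simp add: p_def)
    show ?thesis unfolding lm_def cNr p_def[symmetric] using Nr g p
      by (simp add: \<Lambda>_def p_def[symmetric] power2_eq_square field_simps)
  qed
  have lm0: "lm \<ge> 0" unfolding lm_eq using Nr eta g
    by (intro mult_nonneg_nonneg divide_nonneg_nonneg) (auto simp: field_simps)
  have th0: "\<theta> > 0" using eta n by (simp add: \<theta>_def)
  have cr: "real (card {1..n}) = real n" by simp
  have C: "real (card {xs\<in>permutations_of_set {1..n}. badl a r0 \<theta> xs}) / fact (card {1..n})
      \<le> exp ((\<Lambda> - c / (real (card {1..n}) - 1)) * (sum a {1..n} / real (card {1..n})) - (\<Lambda> - c / (real r0 - 1)) * \<theta>)"
    by (rule core[OF g th0 L0 c_def r0]) (use lm0 ab True in \<open>auto simp: lm_def Nr_def\<close>)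
  have "(\<Lambda> - c / (real n - 1)) * (sum a {1..n} / real n) \<le> \<Lambda> * (1 / real n)"
  proof (rule mult_mono)
    show "\<Lambda> - c / (real n - 1) \<le> \<Lambda>" using c0 True r0 by simp
    show "sum a {1..n} / real n \<le> 1 / real n" using S1 n by (simp add: divide_right_mono)
    show "0 \<le> \<Lambda>" by (rule L0)
    show "0 \<le> sum a {1..n} / real n" using ab by (auto intro!: sum_nonneg divide_nonneg_nonneg)
  qed
  hence "(\<Lambda> - c / (real n - 1)) * (sum a {1..n} / real n) - lm * \<theta> \<le> \<Lambda> / real n - lm * \<theta>" by simp
  also have "\<Lambda> / real n - lm * \<theta> = - (Nr * \<eta>^2 / (2 * (1 + \<eta>) * \<gamma> * real n))"
  proof -
    define p where "p = 1 + \<eta>"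
    have p: "p > 0" using eta by (simp add: p_def)
    show ?thesis unfolding lm_def cNr \<theta>_def p_def[symmetric] using Nr g p n
      by (simp add: \<Lambda>_def p_def[symmetric] power2_eq_square field_simps) (simp add: p_def algebra_simps)
  qed
  also have "\<dots> \<le> - (\<epsilon>^2) / (6 * \<gamma>)"
  proof -
    have k: "\<epsilon>^2 / 2 \<le> Nr * \<eta>^2 / real n" using key by (simp add: Nr_def)
    have "\<epsilon>^2 / (6 * \<gamma>) = (\<epsilon>^2 / 2) / (3 * \<gamma>)" by simp
    also have "\<dots> \<le> (Nr * \<eta>^2 / real n) / (3 * \<gamma>)" using k g by (intro divide_right_mono) auto
    also have "\<dots> \<le> (Nr * \<eta>^2 / real n) / (2 * (1 + \<eta>) * \<gamma>)"
      using eta g Nr n by (intro divide_left_mono mult_pos_pos) (auto intro!: mult_right_mono)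
    also have "\<dots> = Nr * \<eta>^2 / (2 * (1 + \<eta>) * \<gamma> * real n)" by (simp add: field_simps)
    finally show ?thesis by simp
  qed
  finally have E: "(\<Lambda> - c / (real n - 1)) * (sum a {1..n} / real n) - lm * \<theta> \<le> - (\<epsilon>^2) / (6 * \<gamma>)" .
  show ?thesis
    using order_trans[OF C] E unfolding cr lm_def Nr_def \<theta>_def by simp
qed



theorem mainTheorem6:
  fixes n :: nat
    and b :: "real^'m::finite"
    and f :: "nat \<Rightarrow> real^'k::finite \<Rightarrow> ereal"
    and A :: "nat \<Rightarrow> real^'k^'m"
    and Pstar \<gamma> \<epsilon> :: real
    and L :: nat
    and xs :: "nat \<Rightarrow> real^'k"
    and y :: "real^'m"
  assumes n_pos: "n > 0"
    and b_pos: "\<forall>i. b $ i > 0"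
    and fG: "\<forall>t\<in>{1..n}. classG (f t)"
    and A_nonneg: "\<forall>t\<in>{1..n}. \<forall>i j. A t $ i $ j \<ge> 0"
    and Pstar_def: "ereal Pstar = (SUP x\<in>{x. \<forall>i. (\<Sum>t=1..n. A t *v x t) $ i \<le> b $ i}. \<Sum>t=1..n. f t (x t))"
    and Pstar_pos: "Pstar > 0"
    and gamma_pos: "\<gamma> > 0"
    and gamma_A: "\<forall>t\<in>{1..n}. \<forall>x. f t x \<ge> 0 \<longrightarrow> (\<forall>i. (A t *v x) $ i / b $ i \<le> \<gamma>)"
    and gamma_f: "\<forall>t\<in>{1..n}. \<forall>x\<in>edom (f t). f t x \<le> ereal (\<gamma> * Pstar)"
    and eps: "0 < \<epsilon>" "\<epsilon> < 1"
    and L_def: "real L = log 2 (1 / \<epsilon>)"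
    and neps_int: "real n * \<epsilon> \<in> \<int>"
    and xs_feas: "\<forall>i. (\<Sum>t=1..n. A t *v xs t) $ i \<le> b $ i"
    and xs_opt: "(\<Sum>t=1..n. f t (xs t)) = ereal Pstar"
    and y_nonneg: "\<forall>i. y $ i \<ge> 0"
    and y_slack: "\<forall>i. (\<Sum>t=1..n. A t *v xs t) $ i < b $ i \<longrightarrow> y $ i = 0"
    and y_super: "\<forall>t\<in>{1..n}. supergradient (f t) (xs t) (transpose (A t) *v y)"
  shows "measure_pmf.prob (pmf_of_set {\<sigma>. \<sigma> permutes {1..n}})
           {\<sigma>. \<exists>t. 1 \<le> t \<and> real t \<le> real n * (1 - \<epsilon>) \<and>
                 (\<exists>i. Rti n A xs b \<sigma> t i > b $ i / real n * 2 powr (- real_of_int (kappa n \<epsilon> t) / 2) * sqrt \<epsilon>)}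
         \<le> real CARD('m) * real L * exp (- (\<epsilon>^2) / (6 * \<gamma>))"
proof -
  have fin: "\<forall>t\<in>{1..n}. \<bar>f t (xs t)\<bar> \<noteq> \<infinity>"
  proof -
    have "\<bar>\<Sum>t=1..n. f t (xs t)\<bar> \<noteq> \<infinity>" using xs_opt by simp
    thus ?thesis using sum_Inf[of "\<lambda>t. f t (xs t)" "{1..n}"] by auto
  qed
  define g where "g t = real_of_ereal (f t (xs t))" for t
  have fg: "\<forall>t\<in>{1..n}. f t (xs t) = ereal (g t)" using fin by (auto simp: g_def ereal_real)
  have sumg: "(\<Sum>t=1..n. g t) = Pstar"
  proof -
    have "ereal (\<Sum>t=1..n. g t) = (\<Sum>t=1..n. f t (xs t))" using fg by simp
    thus ?thesis using xs_opt by simp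
  qed
  have xs_nonneg: "\<forall>t\<in>{1..n}. \<forall>j. 0 \<le> xs t $ j"
  proof (intro ballI allI)
    fix t j assume t: "t \<in> {1..n}"
    have "xs t \<in> edom (f t)" using fg t by (auto simp: edom_def)
    moreover have "edom (f t) \<subseteq> {x. \<forall>j. 0 \<le> x $ j}" using fG t by (simp add: classG_def)
    ultimately show "0 \<le> xs t $ j" by blast
  qed
  have Ax_nonneg: "\<forall>t\<in>{1..n}. \<forall>i. 0 \<le> (A t *v xs t) $ i"
    using xs_nonneg A_nonneg by (auto simp: matrix_vector_mult_def intro!: sum_nonneg)
  have g_nonneg: "\<forall>t\<in>{1..n}. 0 \<le> g t"
  proof (rule ballI, rule ccontr)
    fix t0 assume t0: "t0 \<in> {1..n}" and neg: "\<not> 0 \<le> g t0"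
    define x' where "x' = xs(t0 := 0)"
    have feas: "\<forall>i. (\<Sum>t=1..n. A t *v x' t) $ i \<le> b $ i"
    proof
      fix i
      have "(\<Sum>t=1..n. A t *v x' t) $ i = (\<Sum>t=1..n. (A t *v x' t) $ i)" by simp
      also have "\<dots> \<le> (\<Sum>t=1..n. (A t *v xs t) $ i)"
      proof (rule sum_mono)
        fix t assume t: "t \<in> {1..n}"
        show "(A t *v x' t) $ i \<le> (A t *v xs t) $ i"
        proof (cases "t = t0")
          case True
          have "x' t = 0" using True by (simp add: x'_def)
          hence "(A t *v x' t) $ i = 0" by (simp add: matrix_vector_mult_0_right)
          thus ?thesis using Ax_nonneg t by simp
        next
          case False
          hence "x' t = xs t" by (simp add: x'_def)
          thus ?thesis by simp
        qed
      qed
      also have "\<dots> = (\<Sum>t=1..n. A t *v xs t) $ i" by simp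
      finally show "(\<Sum>t=1..n. A t *v x' t) $ i \<le> b $ i" using xs_feas by (meson order_trans)
    qed
    have val: "(\<Sum>t=1..n. f t (x' t)) = ereal (\<Sum>t=1..n. if t = t0 then 0 else g t)"
    proof -
      have "(\<Sum>t=1..n. f t (x' t)) = (\<Sum>t=1..n. ereal (if t = t0 then 0 else g t))"
      proof (rule sum.cong[OF refl])
        fix t assume t: "t \<in> {1..n}"
        show "f t (x' t) = ereal (if t = t0 then 0 else g t)"
        proof (cases "t = t0")
          case True
          have "f t 0 = 0" using fG t by (simp add: classG_def)
          thus ?thesis using True by (simp add: x'_def zero_ereal_def)
        next
          case False
          thus ?thesis using fg t by (simp add: x'_def)
        qed
      qed
      thus ?thesis by simp
    qed
    have "(\<Sum>t=1..n. if t = t0 then 0 else g t) = (\<Sum>t=1..n. g t) - g t0"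
    proof -
      have fS: "finite {1..n}" by simp
      have "(\<Sum>t=1..n. if t = t0 then 0 else g t) = (if t0 = t0 then 0 else g t0) + (\<Sum>t\<in>{1..n} - {t0}. if t = t0 then 0 else g t)"
        by (rule sum.remove[OF fS t0])
      also have "(\<Sum>t\<in>{1..n} - {t0}. if t = t0 then 0 else g t) = (\<Sum>t\<in>{1..n} - {t0}. g t)"
        by (rule sum.cong) auto
      also have "(\<Sum>t=1..n. g t) = g t0 + (\<Sum>t\<in>{1..n} - {t0}. g t)" by (rule sum.remove[OF fS t0])
      ultimately show ?thesis by simp
    qed
    hence gt: "(\<Sum>t=1..n. if t = t0 then 0 else g t) > Pstar" using sumg neg by simp
    have "(\<Sum>t=1..n. f t (x' t)) \<le> ereal Pstar"
      unfolding Pstar_def by (rule SUP_upper) (use feas in simp)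
    thus False using val gt by simp
  qed
  define v where "v i s = (A s *v xs s) $ i / b $ i" for i s
  have v_bd: "\<forall>s\<in>{1..n}. 0 \<le> v i s \<and> v i s \<le> \<gamma>" for i
  proof
    fix s assume s: "s \<in> {1..n}"
    have "f s (xs s) \<ge> 0" using fg g_nonneg s by simp
    hence "(A s *v xs s) $ i / b $ i \<le> \<gamma>" using gamma_A s by blast
    moreover have "0 \<le> (A s *v xs s) $ i / b $ i" using Ax_nonneg s b_pos
      by (intro divide_nonneg_nonneg) (auto intro: less_imp_le)
    ultimately show "0 \<le> v i s \<and> v i s \<le> \<gamma>" by (simp add: v_def)
  qed
  have v_sum: "sum (v i) {1..n} \<le> 1" for i
  proof -
    have "sum (v i) {1..n} = (\<Sum>s=1..n. (A s *v xs s) $ i) / b $ i"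
      by (simp add: v_def sum_divide_distrib)
    also have "\<dots> = (\<Sum>s=1..n. A s *v xs s) $ i / b $ i" by simp
    also have "\<dots> \<le> 1" using xs_feas b_pos[rule_format, of i] by simp
    finally show ?thesis .
  qed
  have L1: "L \<ge> 1"
  proof -
    have "log 2 (1 / \<epsilon>) > 0" using eps by simp
    thus ?thesis using L_def by simp
  qed
  have epsL: "\<epsilon> = 2 powr (- real L)"
  proof -
    have "2 powr (real L) = 1 / \<epsilon>" using L_def eps by simp
    thus ?thesis using eps by (simp add: powr_minus field_simps)
  qed
  have eps_half: "\<epsilon> \<le> 1/2"
  proof -
    have "2 powr (- real L) \<le> 2 powr (-1)" using L1 by (intro powr_mono) auto
    also have "(2::real) powr (-1) = 1/2" by (simp add: powr_minus)
    finally show ?thesis using epsL by simp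
  qed
  define \<eta> where "\<eta> k = 2 powr (- real k / 2) * sqrt \<epsilon>" for k :: nat
  define Nk where "Nk k = real n * \<epsilon> * 2 powr (real k - 1)" for k :: nat
  define r0 where "r0 k = nat \<lceil>Nk k\<rceil> + 1" for k :: nat
  define Bad where "Bad i k = {xl\<in>permutations_of_set {1..n}. badl (v i) (r0 k) ((1 + \<eta> k) / real n) xl}" for i k
  have eta_sq: "(\<eta> k)^2 = 2 powr (- real k) * \<epsilon>" for k
  proof -
    have "(2 powr (- real k / 2))^2 = (2::real) powr (- real k)"
      by (simp add: power2_eq_square powr_add[symmetric])
    thus ?thesis using eps by (simp add: \<eta>_def power_mult_distrib)
  qed
  have Nk_pos: "Nk k > 0" for k using n_pos eps by (simp add: Nk_def)
  have blk: "real (card (Bad i k)) / fact n \<le> exp (- (\<epsilon>^2) / (6 * \<gamma>))" if k: "k \<in> {1..L}" for i k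
    unfolding Bad_def
  proof (rule block_bound[OF n_pos v_bd gamma_pos v_sum])
    show "0 < \<eta> k" using eps by (simp add: \<eta>_def)
    show "\<eta> k \<le> 1/2"
    proof (rule power2_le_imp_le)
      have "2 powr (- real k) \<le> (2::real) powr (-1)" using k by (intro powr_mono) auto
      also have "(2::real) powr (-1) = 1/2" by (simp add: powr_minus)
      finally have "2 powr (- real k) * \<epsilon> \<le> 1/2 * (1/2)"
        using eps_half eps by (intro mult_mono) auto
      thus "(\<eta> k)^2 \<le> (1/2)^2" unfolding eta_sq by (simp add: power2_eq_square)
    qed simp
    have c1: "\<lceil>Nk k\<rceil> \<ge> 1" using Nk_pos[of k] by simp
    show "r0 k \<ge> 2" using c1 unfolding r0_def by linarith
    have rr: "real (r0 k) - 1 = real_of_int \<lceil>Nk k\<rceil>" using c1 by (simp add: r0_def)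
    have "\<epsilon>^2 / 2 = Nk k * (\<eta> k)^2 / real n"
    proof -
      have "2 powr (real k - 1) * 2 powr (- real k) = (2::real) powr (-1)" by (simp add: powr_add[symmetric])
      also have "(2::real) powr (-1) = 1/2" by (simp add: powr_minus)
      finally have p: "2 powr (real k - 1) * 2 powr (- real k) = (1/2::real)" .
      have "Nk k * (\<eta> k)^2 / real n = \<epsilon>^2 * (2 powr (real k - 1) * 2 powr (- real k))"
        using n_pos unfolding eta_sq by (simp add: Nk_def power2_eq_square field_simps)
      thus ?thesis using p by simp
    qed
    also have "\<dots> \<le> (real (r0 k) - 1) * (\<eta> k)^2 / real n"
      unfolding rr using n_pos by (intro divide_right_mono mult_right_mono) auto
    finally show "\<epsilon>^2 / 2 \<le> (real (r0 k) - 1) * (\<eta> k)^2 / real n" .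
  qed
  define P where "P = {\<sigma>. \<sigma> permutes {1..n}}"
  define E where "E = {\<sigma>. \<exists>t. 1 \<le> t \<and> real t \<le> real n * (1 - \<epsilon>) \<and>
                 (\<exists>i. Rti n A xs b \<sigma> t i > b $ i / real n * 2 powr (- real_of_int (kappa n \<epsilon> t) / 2) * sqrt \<epsilon>)}"
  define ml where "ml \<sigma> = map \<sigma> [1..<Suc n]" for \<sigma> :: "nat \<Rightarrow> nat"
  have finP: "finite P" unfolding P_def by (rule finite_permutations) simp
  have P_ne: "P \<noteq> {}" unfolding P_def using permutes_id by blast
  have cardP: "card P = fact n" unfolding P_def by (rule card_permutations) auto
  have ml_perm: "ml \<sigma> \<in> permutations_of_set {1..n}" if "\<sigma> \<in> P" for \<sigma>
  proof (rule permutations_of_setI)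
    have p: "\<sigma> permutes {1..n}" using that by (simp add: P_def)
    have "set (ml \<sigma>) = \<sigma> ` {1..n}" by (auto simp: ml_def)
    thus "set (ml \<sigma>) = {1..n}" using permutes_image[OF p] by simp
    show "distinct (ml \<sigma>)" unfolding ml_def
      using permutes_inj_on[OF p] by (auto simp: distinct_map intro: inj_on_subset)
  qed
  have ml_inj: "inj_on ml P"
  proof (rule inj_onI)
    fix \<sigma> \<tau> assume s: "\<sigma> \<in> P" "\<tau> \<in> P" "ml \<sigma> = ml \<tau>"
    show "\<sigma> = \<tau>"
    proof
      fix x
      show "\<sigma> x = \<tau> x"
      proof (cases "x \<in> {1..n}")
        case True
        hence "x \<in> set [1..<Suc n]" by auto
        thus ?thesis using s(3) unfolding ml_def by (metis map_eq_conv)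
      next
        case False
        thus ?thesis using s(1,2) by (simp add: P_def permutes_not_in)
      qed
    qed
  qed
  have sub: "P \<inter> E \<subseteq> (\<Union>i. \<Union>k\<in>{1..L}. {\<sigma>\<in>P. ml \<sigma> \<in> Bad i k})"
  proof
    fix \<sigma> assume "\<sigma> \<in> P \<inter> E"
    then obtain t i where \<sigma>P: "\<sigma> \<in> P" and t1: "1 \<le> t" and tn: "real t \<le> real n * (1 - \<epsilon>)"
      and R: "Rti n A xs b \<sigma> t i > b $ i / real n * 2 powr (- real_of_int (kappa n \<epsilon> t) / 2) * sqrt \<epsilon>"
      unfolding E_def by blast
    have p: "\<sigma> permutes {1..n}" using \<sigma>P by (simp add: P_def)
    have tlt: "t < n"
    proof -
      have "real n * (1 - \<epsilon>) < real n" using n_pos eps by simp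
      thus ?thesis using tn by linarith
    qed
    define X where "X = (real n - real t) / (real n * \<epsilon>)"
    have X1: "X \<ge> 1"
    proof -
      have "real n * \<epsilon> \<le> real n - real t" using tn by (simp add: algebra_simps)
      thus ?thesis using n_pos eps by (simp add: X_def)
    qed
    have XL: "X < 2 powr real L"
    proof -
      have "2 powr real L = 1 / \<epsilon>" using L_def eps by simp
      moreover have "real n - real t < real n" using t1 by simp
      hence "X < real n / (real n * \<epsilon>)" unfolding X_def using n_pos eps
        by (intro divide_strict_right_mono) auto
      ultimately show ?thesis using n_pos by simp
    qed
    have lg0: "log 2 X \<ge> 0" using X1 by simp
    have lgL: "log 2 X < real L" using XL X1 by (simp add: log_less_iff)
    define k where "k = nat (kappa n \<epsilon> t)"
    have kap: "kappa n \<epsilon> t = \<lfloor>log 2 X\<rfloor> + 1" by (simp add: kappa_def X_def)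
    have fl0: "\<lfloor>log 2 X\<rfloor> \<ge> 0" using lg0 by simp
    have flL: "\<lfloor>log 2 X\<rfloor> < int L" using lgL by linarith
    have kk: "real_of_int (kappa n \<epsilon> t) = real k" using fl0 by (simp add: k_def kap)
    have kr: "k \<in> {1..L}"
    proof -
      obtain z where z: "z = \<lfloor>log 2 X\<rfloor>" by blast
      have "0 \<le> z" "z < int L" using fl0 flL z by auto
      hence "1 \<le> nat (z + 1) \<and> nat (z + 1) \<le> L" by (simp add: le_nat_iff nat_le_iff)
      thus ?thesis unfolding k_def kap z[symmetric] by simp
    qed
    have "real k - 1 \<le> log 2 X"
    proof -
      have "real k - 1 = real_of_int \<lfloor>log 2 X\<rfloor>" using kk kap by simp
      thus ?thesis by simp
    qed
    hence "2 powr (real k - 1) \<le> X" using X1 by (subst (asm) le_log_iff) auto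
    hence Nkle: "Nk k \<le> real n - real t" using n_pos eps by (simp add: X_def Nk_def field_simps)
    have "\<lceil>Nk k\<rceil> \<le> int (n - t)" using Nkle tlt by (simp add: ceiling_le_iff of_nat_diff)
    hence r0le: "(t - 1) + r0 k \<le> n" using t1 tlt Nk_pos[of k] by (simp add: r0_def)
    have "ml \<sigma> \<in> Bad i k"
      unfolding Bad_def
    proof (intro CollectI conjI ml_perm[OF \<sigma>P])
      have len: "length (ml \<sigma>) = n" by (simp add: ml_def)
      have dr: "set (drop (t - 1) (ml \<sigma>)) = \<sigma> ` {t..n}"
      proof -
        have "drop (t - 1) [1..<Suc n] = [t..<Suc n]" using t1 tlt by simp
        thus ?thesis by (auto simp: ml_def drop_map)
      qed
      have sm: "sum (v i) (\<sigma> ` {t..n}) = (\<Sum>s=t..n. v i (\<sigma> s))"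
        using sum.reindex[OF permutes_inj_on[OF p, of "{t..n}"], of "v i"] by (simp add: comp_def)
      have sv: "(\<Sum>s=t..n. v i (\<sigma> s)) = (\<Sum>s=t..n. (A (\<sigma> s) *v xs (\<sigma> s)) $ i) / b $ i"
        by (simp add: v_def sum_divide_distrib)
      define Q where "Q = (\<Sum>s=t..n. (A (\<sigma> s) *v xs (\<sigma> s)) $ i)"
      have bi: "b $ i > 0" using b_pos by simp
      have rt: "real n - real t + 1 > 0" using tlt by simp
      have R': "Q / (real n - real t + 1) - b $ i / real n > b $ i / real n * \<eta> k"
        using R unfolding Rti_def Q_def \<eta>_def kk by simp
      have d: "b $ i / real n * (1 + \<eta> k) = b $ i / real n + b $ i / real n * \<eta> k" by (simp add: distrib_left)
      have A1: "b $ i / real n * (1 + \<eta> k) < Q / (real n - real t + 1)" using R' d by linarith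
      have A2: "b $ i / real n * (1 + \<eta> k) * (real n - real t + 1) < Q"
        using A1 pos_less_divide_eq[OF rt] by blast
      have e: "(real n - real t + 1) * ((1 + \<eta> k) / real n) * b $ i = b $ i / real n * (1 + \<eta> k) * (real n - real t + 1)"
        by (simp add: algebra_simps)
      have ineq: "(real n - real t + 1) * ((1 + \<eta> k) / real n) < Q / b $ i"
        unfolding pos_less_divide_eq[OF bi] e by (rule A2)
      have lm: "real (length (ml \<sigma>) - (t - 1)) = real n - real t + 1"
        using len t1 tlt by (simp add: of_nat_diff)
      have gl: "(1 + \<eta> k) / real n * real (length (ml \<sigma>) - (t - 1)) < sum (v i) (set (drop (t - 1) (ml \<sigma>)))"
        unfolding lm dr sm sv Q_def[symmetric] using ineq by (simp only: mult.commute)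
      have jl: "(t - 1) + r0 k \<le> length (ml \<sigma>)" using r0le len by simp
      show "badl (v i) (r0 k) ((1 + \<eta> k) / real n) (ml \<sigma>)"
        unfolding badl_def using jl gl by blast
    qed
    thus "\<sigma> \<in> (\<Union>i. \<Union>k\<in>{1..L}. {\<sigma>\<in>P. ml \<sigma> \<in> Bad i k})" using kr \<sigma>P by blast
  qed
  have c1: "card (P \<inter> E) \<le> (\<Sum>i\<in>UNIV. \<Sum>k\<in>{1..L}. card (Bad i k))"
  proof -
    have fU: "finite (\<Union>i. \<Union>k\<in>{1..L}. {\<sigma>\<in>P. ml \<sigma> \<in> Bad i k})"
      by (rule finite_subset[OF _ finP]) blast
    have "card (P \<inter> E) \<le> card (\<Union>i. \<Union>k\<in>{1..L}. {\<sigma>\<in>P. ml \<sigma> \<in> Bad i k})"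
      by (rule card_mono[OF fU sub])
    also have "\<dots> \<le> (\<Sum>i\<in>UNIV. card (\<Union>k\<in>{1..L}. {\<sigma>\<in>P. ml \<sigma> \<in> Bad i k}))"
      by (rule card_UN_le) simp
    also have "\<dots> \<le> (\<Sum>i\<in>UNIV. \<Sum>k\<in>{1..L}. card {\<sigma>\<in>P. ml \<sigma> \<in> Bad i k})"
      by (intro sum_mono card_UN_le) simp
    also have "\<dots> \<le> (\<Sum>i\<in>UNIV. \<Sum>k\<in>{1..L}. card (Bad i k))"
    proof (intro sum_mono)
      fix i k
      show "card {\<sigma>\<in>P. ml \<sigma> \<in> Bad i k} \<le> card (Bad i k)"
        by (rule card_inj_on_le[of ml]) (use ml_inj in \<open>auto simp: Bad_def intro: inj_on_subset\<close>)
    qed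
    finally show ?thesis .
  qed
  have "measure_pmf.prob (pmf_of_set P) E = real (card (P \<inter> E)) / real (card P)"
    by (rule measure_pmf_of_set[OF P_ne finP])
  also have "\<dots> \<le> (\<Sum>i\<in>UNIV. \<Sum>k\<in>{1..L}. real (card (Bad i k))) / fact n"
  proof -
    have "real (card (P \<inter> E)) \<le> real (\<Sum>i\<in>UNIV. \<Sum>k\<in>{1..L}. card (Bad i k))"
      using c1 by (simp only: of_nat_le_iff)
    hence "real (card (P \<inter> E)) \<le> (\<Sum>i\<in>UNIV. \<Sum>k\<in>{1..L}. real (card (Bad i k)))"
      by (simp only: of_nat_sum)
    moreover have "real (card P) = fact n" unfolding cardP by (simp only: of_nat_fact)
    ultimately show ?thesis by (simp add: divide_right_mono)
  qed
  also have "\<dots> = (\<Sum>i\<in>UNIV. \<Sum>k\<in>{1..L}. real (card (Bad i k)) / fact n)"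
    by (simp add: sum_divide_distrib)
  also have "\<dots> \<le> (\<Sum>i\<in>(UNIV::'m set). \<Sum>k\<in>{1..L}. exp (- (\<epsilon>^2) / (6 * \<gamma>)))"
    by (intro sum_mono blk) auto
  also have "\<dots> = real CARD('m) * real L * exp (- (\<epsilon>^2) / (6 * \<gamma>))" by simp
  finally show ?thesis unfolding P_def E_def .
qed

end
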